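(* Let $s$ be a real number with $\frac32<s\le 2$, let $\alpha,\beta>0$ be fixed, and let $K>0$. Suppose that for each $n$ (in an infinite set of natural numbers) $P_n\subset[0,1]^2$ is a set of $n$ points that is $s$-adaptable with constant $K$. Then there exist constants $C,N>0$, independent of $n$, such that for all such $n>N$, $$|\Pi_{\alpha,\beta}(P_n)|\le C\, n^{\frac43+\frac1s}\log n .$$
   Context: For a finite set $P\subset\mathbb R^2$ and real numbers $\alpha,\beta$, define the set of ordered triples $$\Pi_{\alpha,\beta}(P)=\{(p,q,r)\in P\times P\times P:\ p\cdot q=\alpha \text{ and } p\cdot r=\beta\},$$ where $\cdot$ is the standard dot product on $\mathbb R^2$ (the points $p,q,r$ need not be distinct). A set $P\subset[0,1]^2$ of $n$ points is called $s$-adaptable with constant $K$ if it satisfies (energy) $\displaystyle \frac{1}{\binom n2}\sum_{p,q\in P,\ p\neq q}|p-q|^{-s}\le K$, and (separation) $\min\{|p-q|:\ p,q\in P,\ p\neq q\}\ge n^{-1/s}$, where $|\cdot|$ is the Euclidean norm. *)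

theory Defs
  imports "HOL-Analysis.Analysis"
begin

text \<open>Points of the plane are modelled as real \<times> real, whose norm is the Euclidean norm
and whose inner product is the standard dot product.\<close>

definition Pi_ab :: "real \<Rightarrow> real \<Rightarrow> (real \<times> real) set \<Rightarrow> ((real \<times> real) \<times> (real \<times> real) \<times> (real \<times> real)) set" where
  "Pi_ab \<alpha> \<beta> P = {(p, q, r). p \<in> P \<and> q \<in> P \<and> r \<in> P \<and> inner p q = \<alpha> \<and> inner p r = \<beta>}"

definition s_adaptable :: "real \<Rightarrow> real \<Rightarrow> (real \<times> real) set \<Rightarrow> bool" where
  "s_adaptable s K P \<longleftrightarrow>
     finite P \<and> P \<subseteq> {0..1} \<times> {0..1} \<and>
     (1 / real (card P choose 2)) *
        (\<Sum>(p, q) \<in> {(p, q). p \<in> P \<and> q \<in> P \<and> p \<noteq> q}. norm (p - q) powr (- s)) \<le> K \<and>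
     (\<forall>p\<in>P. \<forall>q\<in>P. p \<noteq> q \<longrightarrow> norm (p - q) \<ge> real (card P) powr (- 1 / s))"

end

theory Submission imports Defs begin

definition idx :: "nat \<Rightarrow> real \<Rightarrow> nat" where
  "idx m x = min (m-1) (nat \<lfloor>real m * x\<rfloor>)"

lemma idx_lt: "m > 0 \<Longrightarrow> idx m x < m"
  unfolding idx_def by auto

lemma idx_bounds:
  assumes "m > 0" "0 \<le> x" "x \<le> 1"
  shows "real (idx m x) \<le> real m * x \<and> real m * x \<le> real (idx m x) + 1"
proof -
  have mx: "0 \<le> real m * x" "real m * x \<le> real m" using assms by (auto simp: mult_left_le)
  have f1: "real (nat \<lfloor>real m * x\<rfloor>) \<le> real m * x" using mx by linarith
  have f2: "real m * x < real (nat \<lfloor>real m * x\<rfloor>) + 1" using mx by linarith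
  show ?thesis
  proof (cases "nat \<lfloor>real m * x\<rfloor> \<le> m - 1")
    case True
    then have "idx m x = nat \<lfloor>real m * x\<rfloor>" unfolding idx_def by simp
    then show ?thesis using f1 f2 by simp
  next
    case False
    then have "idx m x = m - 1" unfolding idx_def by simp
    moreover have "real (m - 1) \<le> real (nat \<lfloor>real m * x\<rfloor>)" using False by simp
    moreover have "real (m-1) + 1 = real m" using assms by simp
    ultimately show ?thesis using f1 mx by linarith
  qed
qed

lemma idx_close:
  assumes "m > 0" "0 \<le> x" "x \<le> 1" "0 \<le> y" "y \<le> 1" "idx m x = idx m y"
  shows "\<bar>x - y\<bar> \<le> 1 / real m"
proof -
  have a: "\<bar>real m * x - real m * y\<bar> \<le> 1"
    using idx_bounds[of m x] idx_bounds[of m y] assms by auto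
  have "\<bar>real m * x - real m * y\<bar> = real m * \<bar>x - y\<bar>"
    by (simp add: abs_mult right_diff_distrib[symmetric])
  with a assms(1) show ?thesis by (simp add: field_simps)
qed

lemma count_lemma:
  fixes A :: "'a set" and c :: "'a \<Rightarrow> nat"
  assumes "finite A" "m > 0" "\<And>q. q \<in> A \<Longrightarrow> c q < m"
  shows "real (card A)^2 / real m - real (card A)
     \<le> (\<Sum>(q,r)\<in>{(q,r). q \<in> A \<and> r \<in> A \<and> q \<noteq> r}. if c q = c r then 1 else (0::real))"
proof -
  define f where "f = (\<lambda>(q,r). if c q = c r then 1 else (0::real))"
  define a where "a i = real (card {q\<in>A. c q = i})" for i
  have img: "c ` A \<subseteq> {..<m}" using assms(3) by auto
  have split: "A \<times> A = {(q,r). q \<in> A \<and> r \<in> A \<and> q \<noteq> r} \<union> (\<lambda>q. (q,q)) ` A" by auto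
  have fin: "finite {(q,r). q \<in> A \<and> r \<in> A \<and> q \<noteq> r}"
    by (rule finite_subset[of _ "A \<times> A"]) (use assms(1) in auto)
  have e1: "sum f (A \<times> A) = sum f {(q,r). q \<in> A \<and> r \<in> A \<and> q \<noteq> r} + sum f ((\<lambda>q. (q,q)) ` A)"
    unfolding split by (rule sum.union_disjoint) (use fin assms(1) in auto)
  have e2: "sum f ((\<lambda>q. (q,q)) ` A) = real (card A)"
    by (subst sum.reindex) (auto simp: inj_on_def f_def)
  have e3: "sum f (A \<times> A) = (\<Sum>q\<in>A. a (c q))"
    unfolding sum.cartesian_product[symmetric] a_def f_def
    apply (rule sum.cong)
     apply (auto simp: sum.If_cases[OF assms(1)])
    by (rule arg_cong[where f=card]) auto
  have e4: "(\<Sum>q\<in>A. a (c q)) = (\<Sum>i<m. (\<Sum>q\<in>{q\<in>A. c q = i}. a (c q)))"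
    by (rule sum.group[symmetric]) (use assms(1) img in auto)
  also have "\<dots> = (\<Sum>i<m. (a i)^2)"
    by (rule sum.cong) (auto simp: a_def power2_eq_square)
  finally have e4b: "(\<Sum>q\<in>A. a (c q)) = (\<Sum>i<m. (a i)^2)" .
  have e5: "(\<Sum>i<m. a i) = real (card A)"
  proof -
    have "(\<Sum>i<m. (\<Sum>q\<in>{q\<in>A. c q = i}. (1::real))) = (\<Sum>q\<in>A. 1)"
      by (rule sum.group) (use assms(1) img in auto)
    then show ?thesis by (simp add: a_def)
  qed
  have e6: "(\<Sum>i<m. a i)^2 \<le> (\<Sum>i<m. (a i)^2) * real m"
    using sum_squared_le_sum_of_squares[of a "{..<m}"] by simp
  have "real (card A)^2 / real m \<le> (\<Sum>i<m. (a i)^2)"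
    using e5 e6 assms(2) by (simp add: field_simps)
  then have "real (card A)^2 / real m - real (card A) \<le> sum f {(q,r). q \<in> A \<and> r \<in> A \<and> q \<noteq> r}"
    using e1 e2 e3 e4b by linarith
  then show ?thesis unfolding f_def .
qed


lemma unique_dual:
  fixes p1 p2 q r :: "real \<times> real" and \<gamma> :: real
  assumes "\<gamma> \<noteq> 0" "inner p1 q = \<gamma>" "inner p1 r = \<gamma>" "inner p2 q = \<gamma>" "inner p2 r = \<gamma>" "q \<noteq> r"
  shows "p1 = p2"
proof -
  obtain a1 b1 where p1: "p1 = (a1,b1)" by (cases p1)
  obtain c1 d1 where p2: "p2 = (c1,d1)" by (cases p2)
  obtain x1 y1 where q: "q = (x1,y1)" by (cases q)
  obtain u1 v1 where r: "r = (u1,v1)" by (cases r)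
  have h: "a1*x1+b1*y1 = \<gamma>" "a1*u1+b1 * v1 = \<gamma>" "c1*x1+d1*y1 = \<gamma>" "c1*u1+d1 * v1 = \<gamma>"
    using assms(2-5) p1 p2 q r by auto
  define D where "D = x1 * v1 - y1*u1"
  have i1: "a1*D = \<gamma>*(v1 - y1)" "b1*D = \<gamma>*(x1-u1)" "c1*D = \<gamma>*(v1-y1)" "d1*D = \<gamma>*(x1-u1)"
  proof -
    have "a1*D = (a1*x1+b1*y1) * v1 - (a1*u1+b1 * v1)*y1" by (simp add: D_def algebra_simps)
    then show "a1*D = \<gamma>*(v1 - y1)" using h by (simp add: algebra_simps)
    have "b1*D = (a1*u1+b1 * v1)*x1 - (a1*x1+b1*y1)*u1" by (simp add: D_def algebra_simps)
    then show "b1*D = \<gamma>*(x1 - u1)" using h by (simp add: algebra_simps)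
    have "c1*D = (c1*x1+d1*y1) * v1 - (c1*u1+d1 * v1)*y1" by (simp add: D_def algebra_simps)
    then show "c1*D = \<gamma>*(v1 - y1)" using h by (simp add: algebra_simps)
    have "d1*D = (c1*u1+d1 * v1)*x1 - (c1*x1+d1*y1)*u1" by (simp add: D_def algebra_simps)
    then show "d1*D = \<gamma>*(x1 - u1)" using h by (simp add: algebra_simps)
  qed
  show ?thesis
  proof (cases "D = 0")
    case True
    then have "v1 = y1" "x1 = u1" using i1 assms(1) by auto
    then show ?thesis using assms(6) q r by simp
  next
    case False
    then have "a1 = c1" "b1 = d1" using i1 by (metis mult_right_cancel)+
    then show ?thesis using p1 p2 by simp
  qed
qed

definition proj :: "real \<times> real \<Rightarrow> real \<times> real \<Rightarrow> real" where
  "proj p = (if \<bar>fst p\<bar> \<ge> \<bar>snd p\<bar> then snd else fst)"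

lemma line_dist:
  fixes p q r :: "real \<times> real"
  assumes "\<gamma> \<noteq> 0" "inner p q = \<gamma>" "inner p r = \<gamma>"
  shows "norm (q - r) \<le> sqrt 2 * \<bar>proj p q - proj p r\<bar>"
proof -
  obtain a b where p: "p = (a,b)" by (cases p)
  obtain x y where q: "q = (x,y)" by (cases q)
  obtain u w where r: "r = (u,w)" by (cases r)
  have h: "a*(x-u) + b*(y-w) = 0" using assms p q r by (simp add: algebra_simps)
  have nq: "norm (q - r) = sqrt ((x-u)^2 + (y-w)^2)" using q r by (simp add: norm_Pair)
  show ?thesis
  proof (cases "\<bar>a\<bar> \<ge> \<bar>b\<bar>")
    case True
    have pr: "proj p q - proj p r = y - w" using True p q r by (simp add: proj_def)
    have "a \<noteq> 0" using True assms p q r by auto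
    have "a*(x-u) = -(b*(y-w))" using h by linarith
    then have "\<bar>a\<bar> * \<bar>x-u\<bar> = \<bar>b\<bar> * \<bar>y-w\<bar>" by (metis abs_minus_cancel abs_mult)
    also have "\<dots> \<le> \<bar>a\<bar> * \<bar>y-w\<bar>" using True by (simp add: mult_right_mono)
    finally have "\<bar>x-u\<bar> \<le> \<bar>y-w\<bar>" using \<open>a \<noteq> 0\<close> by simp
    then have "(x-u)^2 \<le> (y-w)^2" by (metis abs_le_square_iff)
    then have "(x-u)^2 + (y-w)^2 \<le> (sqrt 2 * \<bar>y-w\<bar>)^2" by (simp add: power_mult_distrib)
    then have "sqrt ((x-u)^2 + (y-w)^2) \<le> sqrt 2 * \<bar>y-w\<bar>" by (simp add: real_le_lsqrt)
    then show ?thesis using nq pr by simp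
  next
    case False
    have pr: "proj p q - proj p r = x - u" using False p q r by (simp add: proj_def)
    have "b \<noteq> 0" using False by auto
    have "b*(y-w) = -(a*(x-u))" using h by linarith
    then have "\<bar>b\<bar> * \<bar>y-w\<bar> = \<bar>a\<bar> * \<bar>x-u\<bar>" by (metis abs_minus_cancel abs_mult)
    also have "\<dots> \<le> \<bar>b\<bar> * \<bar>x-u\<bar>" using False by (simp add: mult_right_mono)
    finally have "\<bar>y-w\<bar> \<le> \<bar>x-u\<bar>" using \<open>b \<noteq> 0\<close> by simp
    then have "(y-w)^2 \<le> (x-u)^2" by (metis abs_le_square_iff)
    then have "(x-u)^2 + (y-w)^2 \<le> (sqrt 2 * \<bar>x-u\<bar>)^2" by (simp add: power_mult_distrib)
    then have "sqrt ((x-u)^2 + (y-w)^2) \<le> sqrt 2 * \<bar>x-u\<bar>" by (simp add: real_le_lsqrt)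
    then show ?thesis using nq pr by simp
  qed
qed


lemma pairs_swap:
  fixes P :: "(real \<times> real) set" and g :: "(real \<times> real) \<times> (real \<times> real) \<Rightarrow> real"
  assumes fin: "finite P" and gpos: "\<And>x. g x \<ge> 0" and gam: "\<gamma> \<noteq> 0"
  shows "(\<Sum>p\<in>P. sum g {(q,r). q \<in> {q\<in>P. inner p q = \<gamma>} \<and> r \<in> {q\<in>P. inner p q = \<gamma>} \<and> q \<noteq> r})
         \<le> sum g {(q,r). q \<in> P \<and> r \<in> P \<and> q \<noteq> r}"
proof -
  define DP where "DP = {(q,r). q \<in> P \<and> r \<in> P \<and> q \<noteq> r}"
  define Dp where "Dp p = {(q,r). q \<in> {q\<in>P. inner p q = \<gamma>} \<and> r \<in> {q\<in>P. inner p q = \<gamma>} \<and> q \<noteq> r}" for p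
  have finD: "finite DP" unfolding DP_def
    by (rule finite_subset[of _ "P \<times> P"]) (use fin in auto)
  have "sum g (Dp p) = (\<Sum>x\<in>DP. if x \<in> Dp p then g x else 0)" for p
  proof -
    have "DP \<inter> Dp p = Dp p" unfolding DP_def Dp_def by auto
    then show ?thesis using sum.inter_restrict[OF finD, of g "Dp p"] by simp
  qed
  then have "(\<Sum>p\<in>P. sum g (Dp p)) = (\<Sum>p\<in>P. \<Sum>x\<in>DP. if x \<in> Dp p then g x else 0)" by simp
  also have "\<dots> = (\<Sum>x\<in>DP. \<Sum>p\<in>P. if x \<in> Dp p then g x else 0)" by (rule sum.swap)
  also have "\<dots> \<le> (\<Sum>x\<in>DP. g x)"
  proof (rule sum_mono)
    fix x assume x: "x \<in> DP"
    have "(\<Sum>p\<in>P. if x \<in> Dp p then g x else 0) = (\<Sum>p\<in>{p\<in>P. x \<in> Dp p}. g x)"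
      by (rule sum.inter_filter[OF fin, symmetric])
    also have "\<dots> = real (card {p\<in>P. x \<in> Dp p}) * g x" by simp
    also have "\<dots> \<le> 1 * g x"
    proof (rule mult_right_mono[OF _ gpos])
      have "card {p\<in>P. x \<in> Dp p} \<le> Suc 0"
      proof (subst card_le_Suc0_iff_eq)
        show "finite {p\<in>P. x \<in> Dp p}" using fin by simp
        show "\<forall>p1\<in>{p\<in>P. x \<in> Dp p}. \<forall>p2\<in>{p\<in>P. x \<in> Dp p}. p1 = p2"
        proof (intro ballI)
          fix p1 p2 assume a1: "p1 \<in> {p\<in>P. x \<in> Dp p}" and a2: "p2 \<in> {p\<in>P. x \<in> Dp p}"
          obtain q r where xqr: "x = (q,r)" by (cases x)
          show "p1 = p2"
            by (rule unique_dual[OF gam, of p1 q r p2]) (use a1 a2 xqr in \<open>auto simp: Dp_def\<close>)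
        qed
      qed
      then show "real (card {p\<in>P. x \<in> Dp p}) \<le> 1" by simp
    qed
    finally show "(\<Sum>p\<in>P. if x \<in> Dp p then g x else 0) \<le> g x" by simp
  qed
  finally show ?thesis unfolding DP_def Dp_def .
qed


lemma cell_energy:
  fixes P :: "(real \<times> real) set"
  assumes box: "P \<subseteq> {0..1} \<times> {0..1}" and fin: "finite P" and gam: "\<gamma> \<noteq> 0"
    and m: "m > 0" and s: "s > 0"
  shows "(real (card {q\<in>P. inner p q = \<gamma>})^2 / real m - real (card {q\<in>P. inner p q = \<gamma>}))
           * (sqrt 2 / real m) powr (-s)
         \<le> (\<Sum>(q,r)\<in>{(q,r). q \<in> {q\<in>P. inner p q = \<gamma>} \<and> r \<in> {q\<in>P. inner p q = \<gamma>} \<and> q \<noteq> r}.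
               norm (q - r) powr (-s))"
proof -
  define A where "A = {q\<in>P. inner p q = \<gamma>}"
  define c where "c q = idx m (proj p q)" for q
  define c0 where "c0 = (sqrt 2 / real m) powr (-s)"
  have finA: "finite A" using fin unfolding A_def by simp
  have pr01: "0 \<le> proj p q \<and> proj p q \<le> 1" if "q \<in> P" for q
    using that box by (auto simp: proj_def)
  have cnt: "real (card A)^2 / real m - real (card A)
     \<le> (\<Sum>(q,r)\<in>{(q,r). q \<in> A \<and> r \<in> A \<and> q \<noteq> r}. if c q = c r then 1 else (0::real))"
    by (rule count_lemma[OF finA m]) (simp add: c_def idx_lt m)
  have c0pos: "c0 \<ge> 0" unfolding c0_def by simp
  have "(real (card A)^2 / real m - real (card A)) * c0
      \<le> (\<Sum>(q,r)\<in>{(q,r). q \<in> A \<and> r \<in> A \<and> q \<noteq> r}. if c q = c r then 1 else (0::real)) * c0"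
    by (rule mult_right_mono[OF cnt c0pos])
  also have "\<dots> = (\<Sum>(q,r)\<in>{(q,r). q \<in> A \<and> r \<in> A \<and> q \<noteq> r}. if c q = c r then c0 else 0)"
    by (subst sum_distrib_right) (rule sum.cong, auto split: if_splits)
  also have "\<dots> \<le> (\<Sum>(q,r)\<in>{(q,r). q \<in> A \<and> r \<in> A \<and> q \<noteq> r}. norm (q - r) powr (-s))"
  proof (rule sum_mono)
    fix x assume x: "x \<in> {(q,r). q \<in> A \<and> r \<in> A \<and> q \<noteq> r}"
    obtain q r where xqr: "x = (q,r)" by (cases x)
    have q: "q \<in> P" "inner p q = \<gamma>" and r: "r \<in> P" "inner p r = \<gamma>" and qr: "q \<noteq> r"
      using x xqr by (auto simp: A_def)
    show "(case x of (q,r) \<Rightarrow> if c q = c r then c0 else 0) \<le> (case x of (q,r) \<Rightarrow> norm (q - r) powr (-s))"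
    proof (cases "c q = c r")
      case True
      have "\<bar>proj p q - proj p r\<bar> \<le> 1 / real m"
        using idx_close[OF m] pr01[OF q(1)] pr01[OF r(1)] True by (simp add: c_def)
      then have "norm (q - r) \<le> sqrt 2 * (1 / real m)"
        using line_dist[OF gam q(2) r(2)] by (meson mult_left_mono order_trans real_sqrt_ge_zero zero_le_numeral)
      then have le: "norm (q - r) \<le> sqrt 2 / real m" by simp
      have pos: "norm (q - r) > 0" using qr by simp
      have "(sqrt 2 / real m) powr (-s) \<le> norm (q - r) powr (-s)"
        by (rule powr_mono2'[OF _ pos le]) (use s in simp)
      then show ?thesis using True xqr by (simp add: c0_def)
    next
      case False
      then show ?thesis using xqr by simp
    qed
  qed
  finally show ?thesis unfolding A_def c0_def .
qed


lemma main_bound: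
  fixes P :: "(real \<times> real) set"
  assumes s1: "3/2 < s" and s2: "s \<le> 2" and gam: "\<gamma> > 0" and K: "K > 0"
    and ad: "s_adaptable s K P" and cardP: "card P = n" and n3: "n \<ge> 3"
  shows "(\<Sum>p\<in>P. real (card {q\<in>P. inner p q = \<gamma>})^2) \<le> (16 + 4*K) * real n powr (11/6)"
proof -
  have fin: "finite P" and box: "P \<subseteq> {0..1} \<times> {0..1}"
    and en: "(1 / real (card P choose 2)) *
        (\<Sum>(p, q) \<in> {(p, q). p \<in> P \<and> q \<in> P \<and> p \<noteq> q}. norm (p - q) powr (- s)) \<le> K"
    using ad unfolding s_adaptable_def by auto
  define g where "g = (\<lambda>(p::real\<times>real, q::real\<times>real). norm (p - q) powr (- s))"
  define E where "E = sum g {(p, q). p \<in> P \<and> q \<in> P \<and> p \<noteq> q}"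
  have npos: "real n \<ge> 3" using n3 by simp
  have ch: "real (n choose 2) > 0" using n3 by simp
  have chle: "real (n choose 2) \<le> real n ^ 2"
  proof -
    have "n choose 2 \<le> n ^ 2" by (rule binomial_le_pow) (use n3 in simp)
    then have "real (n choose 2) \<le> real (n ^ 2)" by (simp only: of_nat_le_iff)
    then show ?thesis by simp
  qed
  have "E \<le> K * real (n choose 2)"
    using en ch cardP unfolding E_def g_def by (simp add: field_simps)
  also have "\<dots> \<le> K * real n ^ 2" using chle K by simp
  finally have Ebound: "E \<le> K * real n ^ 2" .
  define t where "t = real n powr (1/3)"
  have t1: "t \<ge> 1" unfolding t_def using npos by (simp add: ge_one_powr_ge_zero)
  define m where "m = nat \<lceil>t\<rceil>"
  have mt: "real m \<ge> t" "real m \<le> 2 * t" using t1 unfolding m_def by linarith+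
  have m0: "m > 0" using mt t1 by simp
  define k where "k p = real (card {q\<in>P. inner p q = \<gamma>})" for p
  define c0 where "c0 = (sqrt 2 / real m) powr (-s)"
  have c0pos: "c0 > 0" unfolding c0_def using m0 by simp
  have step_a: "(k p ^ 2 / real m - k p) * c0
        \<le> sum g {(q,r). q \<in> {q\<in>P. inner p q = \<gamma>} \<and> r \<in> {q\<in>P. inner p q = \<gamma>} \<and> q \<noteq> r}" for p
    unfolding k_def c0_def g_def
    by (rule cell_energy[OF box fin _ m0]) (use gam s1 in auto)
  have step_b: "(\<Sum>p\<in>P. sum g {(q,r). q \<in> {q\<in>P. inner p q = \<gamma>} \<and> r \<in> {q\<in>P. inner p q = \<gamma>} \<and> q \<noteq> r}) \<le> E"
    unfolding E_def by (rule pairs_swap[OF fin]) (use gam in \<open>auto simp: g_def\<close>)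
  have "(\<Sum>p\<in>P. (k p ^ 2 / real m - k p)) * c0 \<le> E"
    using sum_mono[of P "\<lambda>p. (k p ^ 2 / real m - k p) * c0", OF step_a] step_b
    by (simp add: sum_distrib_right)
  then have sc: "(\<Sum>p\<in>P. (k p ^ 2 / real m - k p)) \<le> K * real n ^ 2 / c0"
    using Ebound c0pos by (simp add: field_simps)
  have mc0: "real m / c0 \<le> 2 * real m powr (1 - s)"
  proof -
    have "1 / c0 = (sqrt 2 / real m) powr s" unfolding c0_def
      by (simp add: powr_minus divide_inverse)
    also have "\<dots> = sqrt 2 powr s / real m powr s" by (simp add: powr_divide)
    finally have a0: "1 / c0 = sqrt 2 powr s / real m powr s" .
    have "real m / c0 = real m * (1 / c0)" by simp
    also have "\<dots> = real m * (sqrt 2 powr s / real m powr s)" using a0 by simp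
    also have "\<dots> = sqrt 2 powr s * (real m / real m powr s)" by simp
    finally have a: "real m / c0 = sqrt 2 powr s * (real m / real m powr s)" .
    have "sqrt 2 powr s \<le> sqrt 2 powr 2" by (rule powr_mono) (use s2 in auto)
    then have b: "sqrt 2 powr s \<le> 2" by simp
    have c: "real m / real m powr s = real m powr (1 - s)"
      using m0 by (simp add: powr_diff)
    have d: "real m powr (1 - s) \<ge> 0" by simp
    show ?thesis using a b c d by (metis mult_right_mono)
  qed
  have mpow: "real m powr (1 - s) \<le> real n powr (-1/6)"
  proof -
    have "real m powr (1 - s) \<le> t powr (1 - s)"
      by (rule powr_mono2') (use s1 t1 mt in auto)
    also have "\<dots> = real n powr ((1-s)/3)" unfolding t_def by (simp add: powr_powr)
    also have "\<dots> \<le> real n powr (-1/6)" by (rule powr_mono) (use s1 npos in auto)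
    finally show ?thesis .
  qed
  have m2: "real m ^ 2 \<le> 4 * real n powr (2/3)"
  proof -
    have "real m ^ 2 \<le> (2 * t)^2" by (rule power_mono) (use mt t1 in auto)
    also have "\<dots> = 4 * t^2" by (simp add: power_mult_distrib)
    finally have a: "real m ^ 2 \<le> 4 * t^2" .
    have "t^2 = t powr 2" using t1 by (simp add: powr_realpow)
    also have "\<dots> = real n powr (2/3)" unfolding t_def by (simp add: powr_powr)
    finally show ?thesis using a by simp
  qed
  define X where "X = (\<Sum>p\<in>P. k p ^ 2)"
  have mk: "real m * k p \<le> k p ^ 2 / 2 + 2 * real m ^ 2" for p
  proof -
    have "0 \<le> (k p - real m)^2 / 2 + 3 * real m ^ 2 / 2" by simp
    then show ?thesis by (simp add: power2_eq_square field_simps)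
  qed
  define Y where "Y = (\<Sum>p\<in>P. k p ^ 2 - real m * k p)"
  have "(\<Sum>p\<in>P. (k p ^ 2 / real m - k p)) = (\<Sum>p\<in>P. (k p ^ 2 - real m * k p) / real m)"
    using m0 by (intro sum.cong) (auto simp: field_simps)
  also have "\<dots> = Y / real m" unfolding Y_def by (simp add: sum_divide_distrib)
  finally have "Y / real m \<le> K * real n ^ 2 / c0" using sc by simp
  then have "Y \<le> (K * real n ^ 2 / c0) * real m" using m0 by (simp add: pos_divide_le_eq)
  also have "(K * real n ^ 2 / c0) * real m = K * real n ^ 2 * (real m / c0)" by simp
  finally have "(\<Sum>p\<in>P. k p ^ 2 - real m * k p) \<le> K * real n ^ 2 * (real m / c0)"
    unfolding Y_def .
  also have "\<dots> \<le> K * real n ^ 2 * (2 * real n powr (-1/6))"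
    using mc0 mpow K by (intro mult_left_mono) auto
  finally have h1: "X - real m * (\<Sum>p\<in>P. k p) \<le> 2 * K * real n ^ 2 * real n powr (-1/6)"
    unfolding X_def by (simp add: sum_subtractf sum_distrib_left)
  have h2: "real m * (\<Sum>p\<in>P. k p) \<le> X / 2 + 2 * real m ^ 2 * real n"
  proof -
    have "real m * (\<Sum>p\<in>P. k p) = (\<Sum>p\<in>P. real m * k p)" by (simp add: sum_distrib_left)
    also have "\<dots> \<le> (\<Sum>p\<in>P. k p ^ 2 / 2 + 2 * real m ^ 2)" by (rule sum_mono) (rule mk)
    also have "\<dots> = X / 2 + 2 * real m ^ 2 * real n"
      unfolding X_def using cardP by (simp add: sum.distrib sum_divide_distrib)
    finally show ?thesis .
  qed
  have X1: "X \<le> 4 * real m ^ 2 * real n + 4 * K * real n ^ 2 * real n powr (-1/6)"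
    using h1 h2 by linarith
  have e1: "real m ^ 2 * real n \<le> 4 * real n powr (5/3)"
  proof -
    have a: "real m ^ 2 * real n \<le> 4 * real n powr (2/3) * real n"
      using m2 npos by (intro mult_right_mono) auto
    have c: "real n powr (2/3 + 1) = real n powr (2/3) * real n powr 1" by (rule powr_add)
    have d: "(2/3 + 1 :: real) = 5/3" by simp
    have e: "real n powr (5/3) = real n powr (2/3) * real n"
      by (metis c d powr_one of_nat_0_le_iff)
    have "4 * real n powr (2/3) * real n = 4 * real n powr (5/3)" unfolding e by (simp only: mult.assoc)
    then show ?thesis using a by linarith
  qed
  have e2: "real n powr (5/3) \<le> real n powr (11/6)" by (rule powr_mono) (use npos in auto)
  have e3: "real n ^ 2 * real n powr (-1/6) = real n powr (11/6)"
  proof -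
    have a: "real n ^ 2 = real n powr 2" using npos by (simp add: powr_realpow)
    have b: "real n powr (2 + -1/6) = real n powr 2 * real n powr (-1/6)" by (rule powr_add)
    have c: "(2 + -1/6 :: real) = 11/6" by simp
    show ?thesis unfolding a by (metis b c)
  qed
  have f1: "4 * K * real n ^ 2 * real n powr (-1/6) = 4 * K * real n powr (11/6)"
    using e3 by (metis mult.assoc)
  have f2: "4 * real m ^ 2 * real n \<le> 16 * real n powr (11/6)"
    using e1 e2 by (simp only: mult.assoc)
  have "X \<le> 16 * real n powr (11/6) + 4 * K * real n powr (11/6)"
    using X1 f1 f2 by linarith
  also have "\<dots> = (16 + 4*K) * real n powr (11/6)" by (simp only: distrib_right)
  finally show ?thesis unfolding X_def k_def .
qed


theorem theorem3:
  fixes s \<alpha> \<beta> K :: real and S :: "nat set" and P :: "nat \<Rightarrow> (real \<times> real) set"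
  assumes "3/2 < s" and "s \<le> 2" and "\<alpha> > 0" and "\<beta> > 0" and "K > 0"
    and "infinite S"
    and "\<And>n. n \<in> S \<Longrightarrow> card (P n) = n \<and> s_adaptable s K (P n)"
  shows "\<exists>C>0. \<exists>N::nat>0. \<forall>n\<in>S. n > N \<longrightarrow>
           real (card (Pi_ab \<alpha> \<beta> (P n))) \<le> C * real n powr (4/3 + 1/s) * ln (real n)"
proof (intro exI[of _ "16 + 4*K"] conjI exI[of _ "2::nat"] ballI impI)
  show "16 + 4*K > 0" using assms(5) by simp
  show "(2::nat) > 0" by simp
  fix n assume nS: "n \<in> S" and n2: "2 < n"
  have cP: "card (P n) = n" and ad: "s_adaptable s K (P n)" using assms(7)[OF nS] by auto
  have fin: "finite (P n)" using ad unfolding s_adaptable_def by auto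
  have n3: "n \<ge> 3" using n2 by simp
  have npos: "real n \<ge> 3" using n3 by simp
  define a where "a p = card {q\<in>P n. inner p q = \<alpha>}" for p
  define b where "b p = card {q\<in>P n. inner p q = \<beta>}" for p
  have "Pi_ab \<alpha> \<beta> (P n) = (SIGMA p:P n. {q\<in>P n. inner p q = \<alpha>} \<times> {q\<in>P n. inner p q = \<beta>})"
    by (auto simp: Pi_ab_def)
  then have "card (Pi_ab \<alpha> \<beta> (P n)) = (\<Sum>p\<in>P n. a p * b p)"
    using fin by (simp add: a_def b_def card_cartesian_product)
  then have "real (card (Pi_ab \<alpha> \<beta> (P n))) = (\<Sum>p\<in>P n. real (a p) * real (b p))" by simp
  also have "\<dots> \<le> (\<Sum>p\<in>P n. (real (a p)^2 + real (b p)^2) / 2)"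
  proof (rule sum_mono)
    fix p
    have "0 \<le> (real (a p) - real (b p))^2" by simp
    then show "real (a p) * real (b p) \<le> (real (a p)^2 + real (b p)^2) / 2"
      by (simp add: power2_eq_square algebra_simps)
  qed
  also have "\<dots> = ((\<Sum>p\<in>P n. real (a p)^2) + (\<Sum>p\<in>P n. real (b p)^2)) / 2"
    by (simp add: sum.distrib sum_divide_distrib[symmetric])
  also have "\<dots> \<le> ((16 + 4*K) * real n powr (11/6) + (16 + 4*K) * real n powr (11/6)) / 2"
    using main_bound[OF assms(1,2,3,5) ad cP n3] main_bound[OF assms(1,2,4,5) ad cP n3]
    unfolding a_def b_def by (intro divide_right_mono add_mono) auto
  also have "\<dots> = (16 + 4*K) * real n powr (11/6)" by simp
  also have "\<dots> \<le> (16 + 4*K) * real n powr (4/3 + 1/s)"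
  proof (rule mult_left_mono)
    have "1/2 \<le> 1/s" using assms(1,2) by (simp add: field_simps)
    then show "real n powr (11/6) \<le> real n powr (4/3 + 1/s)"
      by (intro powr_mono) (use npos in auto)
    show "0 \<le> 16 + 4*K" using assms(5) by simp
  qed
  also have "\<dots> \<le> (16 + 4*K) * real n powr (4/3 + 1/s) * ln (real n)"
  proof -
    have "ln (exp 1) \<le> ln (real n)"
      by (subst ln_le_cancel_iff) (use exp_le npos in auto)
    then have "1 \<le> ln (real n)" by simp
    moreover have "0 \<le> (16 + 4*K) * real n powr (4/3 + 1/s)" using assms(5) by simp
    ultimately show ?thesis by (metis mult_left_mono mult.right_neutral)
  qed
  finally show "real (card (Pi_ab \<alpha> \<beta> (P n))) \<le> (16 + 4*K) * real n powr (4/3 + 1/s) * ln (real n)" .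
qed

end
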